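(* Fix $\alpha>0$. As $\Gamma\to\infty$, \[ 2\cdot\max\left\{ \sup_{0\leq\rho\leq1}\frac{\alpha E_{0}(\rho,\Gamma)}{\rho+\alpha},\ \sup_{\rho\geq1}\frac{\alpha E_{x}(\rho,\Gamma)}{\rho+\alpha}\right\} =[1+o(1)]\cdot\alpha\log(\Gamma), \] where $E_{0}(\rho,\Gamma)=\frac{1}{2}\left[(1-\beta_{0})(1+\rho)+\Gamma+\log\left(\beta_{0}-\frac{\Gamma}{1+\rho}\right)+\rho\log(\beta_{0})\right]$, $\beta_{0}=\frac{1}{2}\left(1+\frac{\Gamma}{1+\rho}\right)\left[1+\sqrt{1-\frac{4\Gamma\rho}{(1+\rho+\Gamma)^{2}}}\right]$, $E_{x}(\rho,\Gamma)=(1-\beta_{x})\rho+\frac{\Gamma}{2}+\frac{\rho}{2}\log\left[\beta_{x}\left(\beta_{x}-\frac{\Gamma}{2\rho}\right)\right]$, $\beta_{x}=\frac{1}{2}+\frac{\Gamma}{4\rho}+\frac{1}{2}\sqrt{1+\frac{\Gamma^{2}}{4\rho^{2}}}$.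
   Context: The left-hand side is the paper's achievability (lower) bound on the optimal MP$\alpha$E exponent per unit bandwidth $F_\alpha(\Gamma)$ for conveying a parameter over a band-limited AWGN channel at SNR $\Gamma$; $E_0$ and $E_x$ are Gallager's random-coding and expurgated functions for the Gaussian channel. Logarithms are natural. *)

theory Defs
  imports Complex_Main "HOL-Library.Landau_Symbols"
begin

text \<open>Gallager's random-coding exponent for the Gaussian channel (natural logs).\<close>
definition beta0 :: "real \<Rightarrow> real \<Rightarrow> real" where
  "beta0 \<rho> \<Gamma> = (1/2) * (1 + \<Gamma> / (1 + \<rho>)) *
      (1 + sqrt (1 - 4 * \<Gamma> * \<rho> / (1 + \<rho> + \<Gamma>)^2))"

definition E0 :: "real \<Rightarrow> real \<Rightarrow> real" where
  "E0 \<rho> \<Gamma> = (1/2) * ((1 - beta0 \<rho> \<Gamma>) * (1 + \<rho>) + \<Gamma>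
      + ln (beta0 \<rho> \<Gamma> - \<Gamma> / (1 + \<rho>)) + \<rho> * ln (beta0 \<rho> \<Gamma>))"

definition betax :: "real \<Rightarrow> real \<Rightarrow> real" where
  "betax \<rho> \<Gamma> = 1/2 + \<Gamma> / (4 * \<rho>) + (1/2) * sqrt (1 + \<Gamma>^2 / (4 * \<rho>^2))"

definition Ex :: "real \<Rightarrow> real \<Rightarrow> real" where
  "Ex \<rho> \<Gamma> = (1 - betax \<rho> \<Gamma>) * \<rho> + \<Gamma> / 2
      + (\<rho> / 2) * ln (betax \<rho> \<Gamma> * (betax \<rho> \<Gamma> - \<Gamma> / (2 * \<rho>)))"

text \<open>The achievability (lower) bound on the MP-alpha-E exponent per unit bandwidth.\<close>
definition F_lower :: "real \<Rightarrow> real \<Rightarrow> real" where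
  "F_lower \<alpha> \<Gamma> = 2 * max (SUP \<rho>\<in>{0..1}. \<alpha> * E0 \<rho> \<Gamma> / (\<rho> + \<alpha>))
                             (SUP \<rho>\<in>{1..}. \<alpha> * Ex \<rho> \<Gamma> / (\<rho> + \<alpha>))"

end

theory Submission
  imports Defs "HOL-Real_Asymp.Real_Asymp"
begin

lemma Ex_form:
  assumes "\<rho> \<ge> 1" "\<Gamma> > 0"
  defines "t \<equiv> \<Gamma> / (2*\<rho>)"
  defines "s \<equiv> sqrt (1 + t^2)"
  shows "Ex \<rho> \<Gamma> = \<rho> * (1 + t - s) / 2 + \<rho> / 2 * ln ((1 + s) / 2)"
proof -
  have r: "\<rho> > 0" using assms by simp
  have b: "betax \<rho> \<Gamma> = (1 + t + s) / 2"
    unfolding betax_def s_def t_def using r by (simp add: power_divide field_simps)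
  have ss: "s^2 = 1 + t^2" unfolding s_def by simp
  have tt: "\<Gamma> / (2 * \<rho>) = t" unfolding t_def ..
  have p: "betax \<rho> \<Gamma> * (betax \<rho> \<Gamma> - \<Gamma> / (2 * \<rho>)) = (1 + s) / 2"
    unfolding b tt using ss by (simp add: field_simps power2_eq_square)
  have g: "\<Gamma> / 2 = \<rho> * t" unfolding t_def using r by simp
  show ?thesis unfolding Ex_def p unfolding g b by (simp add: field_simps)
qed

lemma Ex_upper:
  assumes "\<rho> \<ge> 1" "\<Gamma> > 0"
  shows "Ex \<rho> \<Gamma> \<le> \<rho> / 2 * (1 + ln (1 + \<Gamma>))"
proof -
  define t where "t = \<Gamma> / (2*\<rho>)"
  define s where "s = sqrt (1 + t^2)"
  have t0: "t > 0" unfolding t_def using assms by simp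
  have st: "s \<ge> t" unfolding s_def by (rule real_le_rsqrt) simp
  have s1: "s \<le> 1 + t" unfolding s_def using t0
    by (intro real_le_lsqrt) (auto simp: power2_eq_square algebra_simps)
  have tg: "t \<le> 2 * \<Gamma>" unfolding t_def using assms by (simp add: field_simps)
  have "ln ((1 + s) / 2) \<le> ln (1 + \<Gamma>)"
    using s1 tg t0 st by (subst ln_le_cancel_iff) auto
  hence "\<rho> / 2 * ln ((1 + s) / 2) \<le> \<rho> / 2 * ln (1 + \<Gamma>)"
    using assms by (intro mult_left_mono) auto
  moreover have "\<rho> * (1 + t - s) / 2 \<le> \<rho> / 2" using st assms by (simp add: field_simps)
  ultimately show ?thesis using Ex_form[OF assms] unfolding s_def t_def by (simp add: field_simps)
qed

lemma Ex_lower: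
  assumes "\<rho> \<ge> 1" "\<Gamma> > 0"
  shows "Ex \<rho> \<Gamma> \<ge> \<rho> / 2 * ln (\<Gamma> / (4*\<rho>))"
proof -
  define t where "t = \<Gamma> / (2*\<rho>)"
  define s where "s = sqrt (1 + t^2)"
  have t0: "t > 0" unfolding t_def using assms by simp
  have st: "s \<ge> t" unfolding s_def by (rule real_le_rsqrt) simp
  have s1: "s \<le> 1 + t" unfolding s_def using t0
    by (intro real_le_lsqrt) (auto simp: power2_eq_square algebra_simps)
  have "\<Gamma> / (4*\<rho>) = t / 2" unfolding t_def by simp
  have "ln (\<Gamma> / (4*\<rho>)) \<le> ln ((1 + s) / 2)"
    using st t0 unfolding \<open>\<Gamma> / (4*\<rho>) = t / 2\<close> by (subst ln_le_cancel_iff) auto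
  hence "\<rho> / 2 * ln (\<Gamma> / (4*\<rho>)) \<le> \<rho> / 2 * ln ((1 + s) / 2)"
    using assms by (intro mult_left_mono) auto
  moreover have "\<rho> * (1 + t - s) / 2 \<ge> 0" using s1 assms by simp
  ultimately show ?thesis using Ex_form[OF assms] unfolding s_def t_def by (simp add: field_simps)
qed

lemma E0_upper:
  assumes "0 \<le> \<rho>" "\<rho> \<le> 1" "\<Gamma> > 0"
  shows "E0 \<rho> \<Gamma> \<le> 1 + \<rho> / 2 * ln (1 + \<Gamma>)"
proof -
  define a where "a = 1 + \<rho>"
  define D where "D = sqrt ((\<Gamma> - a)^2 + 4*\<Gamma>)"
  have a1: "a \<ge> 1" "a \<le> 2" unfolding a_def using assms by auto
  have ag: "a + \<Gamma> > 0" using a1 assms by simp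
  have e: "1 - 4 * \<Gamma> * \<rho> / (1 + \<rho> + \<Gamma>)^2 = ((\<Gamma> - a)^2 + 4*\<Gamma>) / (a + \<Gamma>)^2"
  proof -
    have ne: "(1 + \<rho> + \<Gamma>)^2 \<noteq> 0" using ag unfolding a_def by simp
    have "1 - 4 * \<Gamma> * \<rho> / (1 + \<rho> + \<Gamma>)^2 = ((1 + \<rho> + \<Gamma>)^2 - 4 * \<Gamma> * \<rho>) / (1 + \<rho> + \<Gamma>)^2"
      using ne by (simp add: diff_divide_distrib)
    also have "(1 + \<rho> + \<Gamma>)^2 - 4 * \<Gamma> * \<rho> = (\<Gamma> - a)^2 + 4*\<Gamma>"
      unfolding a_def by (simp add: power2_eq_square algebra_simps)
    finally show ?thesis unfolding a_def by (simp add: add.commute add.left_commute)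
  qed
  have sq: "sqrt (1 - 4 * \<Gamma> * \<rho> / (1 + \<rho> + \<Gamma>)^2) = D / (a + \<Gamma>)"
    unfolding e D_def using ag by (simp add: real_sqrt_divide)
  have b: "beta0 \<rho> \<Gamma> = (a + \<Gamma> + D) / (2*a)"
  proof -
    have "1 + \<Gamma> / a = (a + \<Gamma>) / a" using a1 by (simp add: field_simps)
    moreover have "1 + D / (a + \<Gamma>) = (a + \<Gamma> + D) / (a + \<Gamma>)" using ag by (simp add: field_simps)
    moreover have sq': "sqrt (1 - 4 * \<Gamma> * \<rho> / (a + \<Gamma>)^2) = D / (a + \<Gamma>)"
      using sq unfolding a_def .
    ultimately show ?thesis unfolding beta0_def a_def[symmetric] sq' using ag a1 by simp
  qed
  have D0: "D \<ge> 0" unfolding D_def using assms by (intro real_sqrt_ge_zero) (simp add: add_nonneg_nonneg)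
  have Dle: "D \<le> a + \<Gamma>" unfolding D_def using a1 assms ag
    by (intro real_le_lsqrt) (auto simp: power2_eq_square algebra_simps)
  have Dge: "D \<ge> \<Gamma> - a" unfolding D_def using assms by (intro real_le_rsqrt) simp
  have Dgt: "D > \<Gamma> - a"
  proof (cases "\<Gamma> - a < 0")
    case True thus ?thesis using D0 by simp
  next
    case False
    have "sqrt ((\<Gamma> - a)^2) < D" unfolding D_def using assms by (subst real_sqrt_less_iff) simp
    thus ?thesis using False by simp
  qed
  have t1: "(1 - beta0 \<rho> \<Gamma>) * (1 + \<rho>) + \<Gamma> = (a + \<Gamma> - D) / 2"
    unfolding b a_def[symmetric] using a1 by (simp add: field_simps)
  have t1b: "(a + \<Gamma> - D) / 2 \<le> 2" using Dge a1 by simp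
  have t2: "beta0 \<rho> \<Gamma> - \<Gamma> / (1 + \<rho>) = (a - \<Gamma> + D) / (2*a)"
    unfolding b a_def[symmetric] using a1 by (simp add: field_simps)
  have t2b: "ln ((a - \<Gamma> + D) / (2*a)) \<le> 0"
    using Dgt Dle a1 by (subst ln_le_zero_iff) (auto simp: field_simps)
  have t3: "ln (beta0 \<rho> \<Gamma>) \<le> ln (1 + \<Gamma>)"
  proof -
    have ga: "\<Gamma> \<le> \<Gamma> * a" using a1 assms by simp
    have "a + \<Gamma> + D \<le> (1 + \<Gamma>) * (2*a)" using Dle ga a1 by (simp add: algebra_simps)
    hence le: "(a + \<Gamma> + D) / (2*a) \<le> 1 + \<Gamma>" using a1 by (simp add: pos_divide_le_eq)
    have "(a + \<Gamma> + D) / (2*a) > 0" using a1 ag D0 by simp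
    thus ?thesis unfolding b using le by (subst ln_le_cancel_iff) (auto simp: add_pos_pos assms)
  qed
  have t3b: "\<rho> * ln (beta0 \<rho> \<Gamma>) \<le> \<rho> * ln (1 + \<Gamma>)"
    using t3 assms by (intro mult_left_mono) auto
  have sum: "(a + \<Gamma> - D) / 2 + ln ((a - \<Gamma> + D) / (2*a)) + \<rho> * ln (beta0 \<rho> \<Gamma>) \<le> 2 + \<rho> * ln (1 + \<Gamma>)"
    using t1b t2b t3b by linarith
  have "E0 \<rho> \<Gamma> = 1/2 * ((a + \<Gamma> - D) / 2 + ln ((a - \<Gamma> + D) / (2*a)) + \<rho> * ln (beta0 \<rho> \<Gamma>))"
    unfolding E0_def t1 t2 ..
  with sum show ?thesis by simp
qed


lemma A_bound:
  assumes "\<alpha> > 0" "\<Gamma> > 0" "\<rho> \<in> {0..1}"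
  shows "\<alpha> * E0 \<rho> \<Gamma> / (\<rho> + \<alpha>) \<le> 1 + \<alpha> / 2 * ln (1 + \<Gamma>)"
proof -
  define L where "L = ln (1 + \<Gamma>)"
  have L0: "L \<ge> 0" unfolding L_def using assms by simp
  have r: "0 \<le> \<rho>" "\<rho> \<le> 1" using assms by auto
  have pa: "\<rho> + \<alpha> > 0" using assms r by simp
  have "\<alpha> * E0 \<rho> \<Gamma> / (\<rho> + \<alpha>) \<le> \<alpha> * (1 + \<rho> / 2 * L) / (\<rho> + \<alpha>)"
    using E0_upper[OF r assms(2)] assms pa unfolding L_def
    by (intro divide_right_mono mult_left_mono) auto
  also have "\<dots> = \<alpha> / (\<rho> + \<alpha>) + (\<alpha> * \<rho> / (\<rho> + \<alpha>)) * (L / 2)"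
    by (simp add: add_divide_distrib algebra_simps)
  also have "\<dots> \<le> 1 + \<alpha> * (L / 2)"
  proof (intro add_mono mult_right_mono)
    show "\<alpha> / (\<rho> + \<alpha>) \<le> 1" using pa r by simp
    show "\<alpha> * \<rho> / (\<rho> + \<alpha>) \<le> \<alpha>" using pa r assms
      by (simp add: pos_divide_le_eq mult_left_mono)
    show "0 \<le> L / 2" using L0 by simp
  qed
  finally show ?thesis unfolding L_def by simp
qed

lemma B_bound:
  assumes "\<alpha> > 0" "\<Gamma> > 0" "\<rho> \<in> {1..}"
  shows "\<alpha> * Ex \<rho> \<Gamma> / (\<rho> + \<alpha>) \<le> \<alpha> / 2 * (1 + ln (1 + \<Gamma>))"
proof -
  define L where "L = 1 + ln (1 + \<Gamma>)"
  have L0: "L \<ge> 0" unfolding L_def using assms by simp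
  have r: "1 \<le> \<rho>" using assms by auto
  have pa: "\<rho> + \<alpha> > 0" using assms r by simp
  have "\<alpha> * Ex \<rho> \<Gamma> / (\<rho> + \<alpha>) \<le> \<alpha> * (\<rho> / 2 * L) / (\<rho> + \<alpha>)"
    using Ex_upper[OF r assms(2)] assms pa unfolding L_def
    by (intro divide_right_mono mult_left_mono) auto
  also have "\<dots> = (\<alpha> * \<rho> / (\<rho> + \<alpha>)) * (L / 2)"
    using pa by (simp add: field_simps)
  also have "\<dots> \<le> \<alpha> * (L / 2)"
  proof (intro mult_right_mono)
    show "\<alpha> * \<rho> / (\<rho> + \<alpha>) \<le> \<alpha>" using pa r assms
      by (simp add: pos_divide_le_eq mult_left_mono)
    show "0 \<le> L / 2" using L0 by simp
  qed
  finally show ?thesis unfolding L_def by simp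
qed

lemma F_upper:
  assumes "\<alpha> > 0" "\<Gamma> > 0"
  shows "F_lower \<alpha> \<Gamma> \<le> 2 + \<alpha> * (1 + ln (1 + \<Gamma>))"
proof -
  have L0: "ln (1 + \<Gamma>) \<ge> 0" using assms by simp
  have a: "(SUP \<rho>\<in>{0..1}. \<alpha> * E0 \<rho> \<Gamma> / (\<rho> + \<alpha>)) \<le> 1 + \<alpha> / 2 * ln (1 + \<Gamma>)"
    by (rule cSUP_least) (simp, erule A_bound[OF assms])
  have b: "(SUP \<rho>\<in>{1..}. \<alpha> * Ex \<rho> \<Gamma> / (\<rho> + \<alpha>)) \<le> \<alpha> / 2 * (1 + ln (1 + \<Gamma>))"
    by (rule cSUP_least) (simp, erule B_bound[OF assms])
  have "1 + \<alpha> / 2 * ln (1 + \<Gamma>) \<le> 1 + \<alpha> / 2 * (1 + ln (1 + \<Gamma>))"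
    using assms by (simp add: algebra_simps)
  moreover have "\<alpha> / 2 * (1 + ln (1 + \<Gamma>)) \<le> 1 + \<alpha> / 2 * (1 + ln (1 + \<Gamma>))" by simp
  ultimately show ?thesis unfolding F_lower_def using a b by (simp add: algebra_simps)
qed

lemma half_le: "(x::real) / 2 \<le> M \<Longrightarrow> x \<le> 2 * M" by simp

lemma F_lowerb:
  assumes "\<alpha> > 0" "\<Gamma> > 0" "\<rho> \<ge> 1"
  shows "\<alpha> * \<rho> / (\<rho> + \<alpha>) * ln (\<Gamma> / (4*\<rho>)) \<le> F_lower \<alpha> \<Gamma>"
proof -
  have pa: "\<rho> + \<alpha> > 0" using assms by simp
  have bdd: "bdd_above ((\<lambda>\<rho>. \<alpha> * Ex \<rho> \<Gamma> / (\<rho> + \<alpha>)) ` {1..})"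
    by (rule bdd_aboveI2[where M = "\<alpha> / 2 * (1 + ln (1 + \<Gamma>))"]) (erule B_bound[OF assms(1,2)])
  have s: "\<alpha> * Ex \<rho> \<Gamma> / (\<rho> + \<alpha>) \<le> (SUP \<rho>\<in>{1..}. \<alpha> * Ex \<rho> \<Gamma> / (\<rho> + \<alpha>))"
    by (rule cSUP_upper[OF _ bdd]) (use assms in auto)
  have l1: "\<alpha> * (\<rho> / 2 * ln (\<Gamma> / (4*\<rho>))) / (\<rho> + \<alpha>) \<le> \<alpha> * Ex \<rho> \<Gamma> / (\<rho> + \<alpha>)"
    using Ex_lower[OF assms(3,2)] assms pa by (intro divide_right_mono mult_left_mono) auto
  have l2: "\<alpha> * (\<rho> / 2 * ln (\<Gamma> / (4*\<rho>))) / (\<rho> + \<alpha>) = (\<alpha> * \<rho> / (\<rho> + \<alpha>) * ln (\<Gamma> / (4*\<rho>))) / 2"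
    by (simp add: field_simps)
  have m: "(SUP \<rho>\<in>{1..}. \<alpha> * Ex \<rho> \<Gamma> / (\<rho> + \<alpha>)) \<le> max (SUP \<rho>\<in>{0..1}. \<alpha> * E0 \<rho> \<Gamma> / (\<rho> + \<alpha>)) (SUP \<rho>\<in>{1..}. \<alpha> * Ex \<rho> \<Gamma> / (\<rho> + \<alpha>))"
    by (rule max.cobounded2)
  have "(\<alpha> * \<rho> / (\<rho> + \<alpha>) * ln (\<Gamma> / (4*\<rho>))) / 2 \<le> max (SUP \<rho>\<in>{0..1}. \<alpha> * E0 \<rho> \<Gamma> / (\<rho> + \<alpha>)) (SUP \<rho>\<in>{1..}. \<alpha> * Ex \<rho> \<Gamma> / (\<rho> + \<alpha>))"
    unfolding l2[symmetric] by (rule order_trans[OF order_trans[OF l1 s] m])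
  thus ?thesis unfolding F_lower_def by (rule half_le)
qed


lemma aux: assumes "(l::real) \<noteq> 0" "l + a \<noteq> 0" "a \<noteq> 0"
  shows "a*l/(l+a)*X/(a*l) = 1/(1 + a*(1/l)) * (X/l)"
proof -
  have e1: "a*l/(l+a)*X/(a*l) = X/(l+a)" using assms by simp
  have "1 + a*(1/l) = (l+a)/l" using assms by (simp add: field_simps)
  hence e2: "1/(1 + a*(1/l)) * (X/l) = X/(l+a)" using assms by simp
  show ?thesis unfolding e1 e2 ..
qed

theorem mainTheorem6:
  fixes \<alpha> :: real
  assumes "\<alpha> > 0"
  shows "(\<lambda>\<Gamma>. F_lower \<alpha> \<Gamma>) \<sim>[at_top] (\<lambda>\<Gamma>. \<alpha> * ln \<Gamma>)"
proof (rule asymp_equivI')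
  have z: "((\<lambda>\<Gamma>::real. 1 / ln \<Gamma>) \<longlongrightarrow> 0) at_top" by real_asymp
  have l1: "((\<lambda>\<Gamma>::real. ln (1 + \<Gamma>) / ln \<Gamma>) \<longlongrightarrow> 1) at_top" by real_asymp
  have l2: "((\<lambda>\<Gamma>::real. ln (\<Gamma> / (4 * ln \<Gamma>)) / ln \<Gamma>) \<longlongrightarrow> 1) at_top" by real_asymp
  have ev: "eventually (\<lambda>\<Gamma>::real. \<Gamma> \<ge> exp 1) at_top" by (rule eventually_ge_at_top)
  have U: "((\<lambda>\<Gamma>. (2 + \<alpha>) / \<alpha> * (1 / ln \<Gamma>) + ln (1 + \<Gamma>) / ln \<Gamma>) \<longlongrightarrow> 0 + 1) at_top"
    by (intro tendsto_add tendsto_mult_right_zero z l1)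
  have L: "((\<lambda>\<Gamma>. 1 / (1 + \<alpha> * (1 / ln \<Gamma>)) * (ln (\<Gamma> / (4 * ln \<Gamma>)) / ln \<Gamma>)) \<longlongrightarrow> 1 / (1 + \<alpha> * 0) * 1) at_top"
    by (intro tendsto_mult tendsto_divide tendsto_add tendsto_const z l2) simp
  have c1: "1 / (1 + \<alpha> * 0) * 1 = (1::real)" "0 + 1 = (1::real)" by simp_all
  show "((\<lambda>\<Gamma>. F_lower \<alpha> \<Gamma> / (\<alpha> * ln \<Gamma>)) \<longlongrightarrow> 1) at_top"
  proof (rule tendsto_sandwich[OF _ _ L[unfolded c1] U[unfolded c1]])
    show "\<forall>\<^sub>F \<Gamma> in at_top. 1 / (1 + \<alpha> * (1 / ln \<Gamma>)) * (ln (\<Gamma> / (4 * ln \<Gamma>)) / ln \<Gamma>) \<le> F_lower \<alpha> \<Gamma> / (\<alpha> * ln \<Gamma>)"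
      using ev
    proof eventually_elim
      case (elim \<Gamma>)
      have g0: "\<Gamma> > 0" using elim by (meson exp_gt_zero less_le_trans)
      have lg: "ln \<Gamma> \<ge> 1" using elim g0 by (metis ln_exp ln_le_cancel_iff exp_gt_zero)
      have d: "\<alpha> * ln \<Gamma> > 0" using lg assms by simp
      have "\<alpha> * ln \<Gamma> / (ln \<Gamma> + \<alpha>) * ln (\<Gamma> / (4 * ln \<Gamma>)) \<le> F_lower \<alpha> \<Gamma>"
        by (rule F_lowerb[OF assms g0 lg])
      hence "\<alpha> * ln \<Gamma> / (ln \<Gamma> + \<alpha>) * ln (\<Gamma> / (4 * ln \<Gamma>)) / (\<alpha> * ln \<Gamma>) \<le> F_lower \<alpha> \<Gamma> / (\<alpha> * ln \<Gamma>)"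
        using d by (intro divide_right_mono) auto
      moreover have "\<alpha> * ln \<Gamma> / (ln \<Gamma> + \<alpha>) * ln (\<Gamma> / (4 * ln \<Gamma>)) / (\<alpha> * ln \<Gamma>)
          = 1 / (1 + \<alpha> * (1 / ln \<Gamma>)) * (ln (\<Gamma> / (4 * ln \<Gamma>)) / ln \<Gamma>)"
      proof -
        have n1: "ln \<Gamma> \<noteq> 0" "ln \<Gamma> + \<alpha> \<noteq> 0" "\<alpha> \<noteq> 0" using lg assms by auto
        show ?thesis using aux[OF n1] by simp
      qed
      ultimately show ?case by simp
    qed
    show "\<forall>\<^sub>F \<Gamma> in at_top. F_lower \<alpha> \<Gamma> / (\<alpha> * ln \<Gamma>) \<le> (2 + \<alpha>) / \<alpha> * (1 / ln \<Gamma>) + ln (1 + \<Gamma>) / ln \<Gamma>"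
      using ev
    proof eventually_elim
      case (elim \<Gamma>)
      have g0: "\<Gamma> > 0" using elim by (meson exp_gt_zero less_le_trans)
      have lg: "ln \<Gamma> \<ge> 1" using elim g0 by (metis ln_exp ln_le_cancel_iff exp_gt_zero)
      have d: "\<alpha> * ln \<Gamma> > 0" using lg assms by simp
      have "F_lower \<alpha> \<Gamma> / (\<alpha> * ln \<Gamma>) \<le> (2 + \<alpha> * (1 + ln (1 + \<Gamma>))) / (\<alpha> * ln \<Gamma>)"
        using d F_upper[OF assms g0] by (intro divide_right_mono) auto
      moreover have "(2 + \<alpha> * (1 + ln (1 + \<Gamma>))) / (\<alpha> * ln \<Gamma>) = (2 + \<alpha>) / \<alpha> * (1 / ln \<Gamma>) + ln (1 + \<Gamma>) / ln \<Gamma>"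
        using lg assms by (simp add: field_simps)
      ultimately show ?case by simp
    qed
  qed
qed

end
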